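(* Let $(\mathcal{S}^x,G)$ be a finite elation generalized quadrangle of order $(s,t)$ with $s>t$, and suppose $st$ is a power of the prime $p$. Let $a\in G\setminus\{\mathrm{id}\}$ be such that every point fixed by $a$ lies on some line $L_a$ through $x$, and suppose that $\alpha(a)$, where $\alpha(a)+1$ is the number of points of $L_a$ fixed by $a$, is a power of $p$. Let $f(a)$ be the number of lines not incident with $x$ fixed by $a$. Then: (i) $f(a)\neq 0$; (ii) if $f(a)$ is also a power of $p$, then $\alpha(a)/f(a)=(s/t)^{o(a)}$ for some even integer $o(a)$.
   Context: A finite generalized quadrangle (GQ) of order $(s,t)$: every line has $s+1$ points, every point is on $t+1$ lines, two points are on at most one common line, and for each point $p$ not on a line $L$ there is a unique point of $L$ collinear with $p$. An elation generalized quadrangle $(\mathcal{S}^x,G)$: $G\le\mathrm{Aut}(\mathcal{S})$ fixes every line through $x$ and acts sharply transitively on the points not collinear with $x$. *)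

theory Defs
  imports Complex_Main "HOL-Computational_Algebra.Primes"
begin

definition collinear :: "'p set \<Rightarrow> 'l set \<Rightarrow> ('p \<Rightarrow> 'l \<Rightarrow> bool) \<Rightarrow> 'p \<Rightarrow> 'p \<Rightarrow> bool" where
  "collinear P Ls I p q \<longleftrightarrow> (\<exists>l\<in>Ls. I p l \<and> I q l)"

definition finite_GQ :: "'p set \<Rightarrow> 'l set \<Rightarrow> ('p \<Rightarrow> 'l \<Rightarrow> bool) \<Rightarrow> nat \<Rightarrow> nat \<Rightarrow> bool" where
  "finite_GQ P Ls I s t \<longleftrightarrow>
     finite P \<and> finite Ls \<and>
     (\<forall>l\<in>Ls. card {p\<in>P. I p l} = s + 1) \<and>
     (\<forall>p\<in>P. card {l\<in>Ls. I p l} = t + 1) \<and>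
     (\<forall>p\<in>P. \<forall>q\<in>P. p \<noteq> q \<longrightarrow> card {l\<in>Ls. I p l \<and> I q l} \<le> 1) \<and>
     (\<forall>p\<in>P. \<forall>l\<in>Ls. \<not> I p l \<longrightarrow> (\<exists>!q. q \<in> P \<and> I q l \<and> collinear P Ls I p q))"

definition automorphism :: "'p set \<Rightarrow> 'l set \<Rightarrow> ('p \<Rightarrow> 'l \<Rightarrow> bool) \<Rightarrow> ('p \<Rightarrow> 'p) \<times> ('l \<Rightarrow> 'l) \<Rightarrow> bool" where
  "automorphism P Ls I a \<longleftrightarrow>
     bij_betw (fst a) P P \<and> bij_betw (snd a) Ls Ls \<and>
     (\<forall>p\<in>P. \<forall>l\<in>Ls. I p l \<longleftrightarrow> I (fst a p) (snd a l)) \<and>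
     (\<forall>p. p \<notin> P \<longrightarrow> fst a p = p) \<and> (\<forall>l. l \<notin> Ls \<longrightarrow> snd a l = l)"

definition aut_id :: "('p \<Rightarrow> 'p) \<times> ('l \<Rightarrow> 'l)" where
  "aut_id = (id, id)"

definition aut_comp :: "('p \<Rightarrow> 'p) \<times> ('l \<Rightarrow> 'l) \<Rightarrow> ('p \<Rightarrow> 'p) \<times> ('l \<Rightarrow> 'l) \<Rightarrow> ('p \<Rightarrow> 'p) \<times> ('l \<Rightarrow> 'l)" where
  "aut_comp a b = (fst a \<circ> fst b, snd a \<circ> snd b)"

definition aut_inv :: "('p \<Rightarrow> 'p) \<times> ('l \<Rightarrow> 'l) \<Rightarrow> ('p \<Rightarrow> 'p) \<times> ('l \<Rightarrow> 'l)" where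
  "aut_inv a = (inv (fst a), inv (snd a))"

definition aut_subgroup :: "'p set \<Rightarrow> 'l set \<Rightarrow> ('p \<Rightarrow> 'l \<Rightarrow> bool) \<Rightarrow> (('p \<Rightarrow> 'p) \<times> ('l \<Rightarrow> 'l)) set \<Rightarrow> bool" where
  "aut_subgroup P Ls I G \<longleftrightarrow>
     (\<forall>a\<in>G. automorphism P Ls I a) \<and> aut_id \<in> G \<and>
     (\<forall>a\<in>G. \<forall>b\<in>G. aut_comp a b \<in> G) \<and> (\<forall>a\<in>G. aut_inv a \<in> G)"

definition elation_GQ :: "'p set \<Rightarrow> 'l set \<Rightarrow> ('p \<Rightarrow> 'l \<Rightarrow> bool) \<Rightarrow> nat \<Rightarrow> nat \<Rightarrow> 'p \<Rightarrow>
    (('p \<Rightarrow> 'p) \<times> ('l \<Rightarrow> 'l)) set \<Rightarrow> bool" where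
  "elation_GQ P Ls I s t x G \<longleftrightarrow>
     finite_GQ P Ls I s t \<and> x \<in> P \<and> aut_subgroup P Ls I G \<and>
     (\<forall>a\<in>G. \<forall>l\<in>Ls. I x l \<longrightarrow> snd a l = l) \<and>
     (\<forall>y\<in>{q\<in>P. \<not> collinear P Ls I x q}. \<forall>z\<in>{q\<in>P. \<not> collinear P Ls I x q}.
        \<exists>!a. a \<in> G \<and> fst a y = z)"

end

theory Submission imports Defs "Berlekamp_Zassenhaus.Factor_Bound" "Jordan_Normal_Form.Schur_Decomposition" "HOL-Combinatorics.Cycles" begin


definition permm :: "nat \<Rightarrow> (nat \<Rightarrow> nat) \<Rightarrow> 'a::semiring_1 mat" where
  "permm n f = mat n n (\<lambda>(i,j). if j = f i then 1 else 0)"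

lemma permm_carrier[simp]: "permm n f \<in> carrier_mat n n"
  by (simp add: permm_def)

lemma permm_mult_left:
  assumes X: "X \<in> carrier_mat n m" and f: "\<forall>i<n. f i < n" and i: "i < n" and j: "j < m"
  shows "(permm n f * X) $$ (i,j) = X $$ (f i, j)"
proof -
  have "(permm n f * X) $$ (i,j) = (\<Sum>k\<in>{0..<n}. (if k = f i then 1 else 0) * X $$ (k,j))"
    using X i j by (simp add: permm_def scalar_prod_def)
  also have "\<dots> = (\<Sum>k\<in>{0..<n}. if k = f i then X $$ (k,j) else 0)"
    by (rule sum.cong) auto
  also have "\<dots> = X $$ (f i, j)" using f i by (simp add: sum.delta')
  finally show ?thesis .
qed

lemma permm_mult:
  assumes f: "\<forall>i<n. f i < n" and g: "\<forall>i<n. g i < n"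
  shows "permm n f * permm n g = (permm n (g \<circ> f) :: 'a::semiring_1 mat)"
proof (rule eq_matI)
  fix i j assume "i < dim_row (permm n (g \<circ> f) :: 'a mat)" "j < dim_col (permm n (g \<circ> f) :: 'a mat)"
  then have i: "i < n" and j: "j < n" by (auto simp: permm_def)
  show "(permm n f * permm n g) $$ (i, j) = (permm n (g \<circ> f) :: 'a mat) $$ (i, j)"
    using permm_mult_left[of "permm n g" n n f i j] f g i j by (simp add: permm_def)
qed (auto simp: permm_def)

lemma permm_pow:
  assumes f: "\<forall>i<n. f i < n"
  shows "(permm n f :: 'a::semiring_1 mat) ^\<^sub>m k = permm n (f ^^ k)"
proof (induction k)
  case 0
  show ?case by (rule eq_matI) (auto simp: permm_def)
next
  case (Suc k)
  have fk: "\<forall>i<n. (f ^^ k) i < n"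
  proof (induction k)
    case (Suc k) then show ?case using f by auto
  qed auto
  have "(permm n f :: 'a mat) ^\<^sub>m Suc k = permm n (f ^^ k) * permm n f" using Suc by simp
  also have "\<dots> = permm n (f \<circ> (f ^^ k))" by (rule permm_mult[OF fk f])
  also have "f \<circ> (f ^^ k) = f ^^ Suc k" by simp
  finally show ?case .
qed

definition mtrace :: "'a::comm_ring_1 mat \<Rightarrow> 'a" where
  "mtrace A = (\<Sum>i<dim_row A. A $$ (i,i))"

lemma mtrace_comm:
  assumes A: "A \<in> carrier_mat n n" and B: "B \<in> carrier_mat n n"
  shows "mtrace (A * B) = mtrace (B * A)"
proof -
  have "mtrace (A * B) = (\<Sum>i<n. \<Sum>k<n. A $$ (i,k) * B $$ (k,i))"
    using A B by (simp add: mtrace_def scalar_prod_def atLeast0LessThan)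
  also have "\<dots> = (\<Sum>k<n. \<Sum>i<n. B $$ (k,i) * A $$ (i,k))"
    by (subst sum.swap) (simp add: mult.commute)
  also have "\<dots> = mtrace (B * A)"
    using A B by (simp add: mtrace_def scalar_prod_def atLeast0LessThan)
  finally show ?thesis .
qed

lemma mtrace_similar:
  assumes "similar_mat_wit A B P Q" "A \<in> carrier_mat n n"
  shows "mtrace A = mtrace B"
proof -
  from assms have c: "B \<in> carrier_mat n n" "P \<in> carrier_mat n n" "Q \<in> carrier_mat n n"
    and QP: "Q * P = 1\<^sub>m n" and AP: "A = P * B * Q"
    unfolding similar_mat_wit_def Let_def by auto
  have "mtrace A = mtrace ((P * B) * Q)" using AP by simp
  also have "\<dots> = mtrace (Q * (P * B))" by (rule mtrace_comm[of _ n]) (use c in auto)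
  also have "Q * (P * B) = (Q * P) * B" using c by (simp add: assoc_mult_mat[of _ n n _ n _ n])
  also have "\<dots> = B" using QP c by simp
  finally show ?thesis .
qed

lemma mtrace_upper:
  assumes "B \<in> carrier_mat n n"
  shows "mtrace B = sum_list (diag_mat B)"
proof -
  have "sum_list (diag_mat B) = sum_list (map (\<lambda>i. B $$ (i,i)) [0..<n])"
    using assms by (simp add: diag_mat_def)
  also have "\<dots> = (\<Sum>i<n. B $$ (i,i))" by (simp add: sum_set_upt_conv_sum_list_nat[symmetric] atLeast0LessThan)
  finally show ?thesis using assms by (simp add: mtrace_def)
qed

lemma prod_linear_monic:
  "degree (\<Prod>e\<leftarrow>es. [:- (e::'a::idom), 1:]) = length es \<and> coeff (\<Prod>e\<leftarrow>es. [:- e, 1:]) (length es) = 1"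
proof (induction es)
  case (Cons e es)
  let ?Q = "\<Prod>e\<leftarrow>es. [:- e, 1:]"
  have Q0: "?Q \<noteq> 0" using Cons by auto
  have d: "degree ([:-e,1:] * ?Q) = Suc (length es)"
    using Cons Q0 by (subst degree_mult_eq) auto
  have "lead_coeff ([:-e,1:] * ?Q) = 1"
    using Cons by (simp only: lead_coeff_mult) simp
  with d show ?case by simp
qed simp

lemma prod_linear_coeff:
  "es \<noteq> [] \<Longrightarrow> coeff (\<Prod>e\<leftarrow>es. [:- (e::'a::idom), 1:]) (length es - 1) = - sum_list es"
proof (induction es)
  case (Cons e es)
  let ?Q = "\<Prod>e\<leftarrow>es. [:- e, 1:]"
  have m: "coeff ?Q (length es) = 1" using prod_linear_monic[of es] by simp
  have eq: "[:-e,1:] * ?Q = smult (-e) ?Q + pCons 0 ?Q" by (simp add: mult_poly_add_left)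
  show ?case
  proof (cases "es = []")
    case True then show ?thesis by simp
  next
    case False
    then obtain L where L: "length es = Suc L" by (cases es) auto
    have "coeff ([:-e,1:] * ?Q) (length es) = - e * coeff ?Q (length es) + coeff ?Q L"
      unfolding eq using L by simp
    also have "coeff ?Q L = - sum_list es" using Cons.IH[OF False] L by simp
    finally show ?thesis using m by simp
  qed
qed simp

lemma smult_vec_cancel:
  assumes "v \<in> carrier_vec n" "v \<noteq> 0\<^sub>v n" "a \<cdot>\<^sub>v v = b \<cdot>\<^sub>v (v :: 'a::idom vec)"
  shows "a = b"
proof -
  obtain i where i: "i < n" "v $ i \<noteq> 0"
    using assms(1,2) by (metis eq_vecI carrier_vecD index_zero_vec)
  have "(a \<cdot>\<^sub>v v) $ i = (b \<cdot>\<^sub>v v) $ i" using assms(3) by simp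
  then have "a * v $ i = b * v $ i" using i assms(1) by simp
  then show ?thesis using i by simp
qed

lemma prod_list_dvd_power:
  assumes "\<forall>e\<in>set es. [:- e, 1:] dvd (q :: 'a::idom poly)"
  shows "(\<Prod>e\<leftarrow>es. [:- e, 1:]) dvd q ^ length es"
  using assms
proof (induction es)
  case (Cons e es)
  show ?case unfolding list.map prod_list.Cons length_Cons power_Suc
    by (rule mult_dvd_mono) (use Cons in auto)
qed simp

lemma LA_main:
  fixes c :: "nat \<Rightarrow> nat \<Rightarrow> int" and \<sigma> :: "nat \<Rightarrow> nat"
  assumes sig: "\<sigma> permutes {..<n}"
    and sq: "\<And>i j. i < n \<Longrightarrow> j < n \<Longrightarrow> (\<Sum>k<n. c i k * c k j) = D * c i j"
    and D: "D \<noteq> 0"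
    and cinv: "\<And>i j. i < n \<Longrightarrow> j < n \<Longrightarrow> c (\<sigma> i) (\<sigma> j) = c i j"
  shows "D dvd (\<Sum>i<n. c (\<sigma> i) i)"
proof (cases "n = 0")
  case True then show ?thesis by simp
next
  case False
  define E :: "rat mat" where "E = mat n n (\<lambda>(i,j). rat_of_int (c i j) / rat_of_int D)"
  define Pm :: "rat mat" where "Pm = permm n \<sigma>"
  have sl: "\<forall>i<n. \<sigma> i < n" using permutes_in_image[OF sig] by auto
  have Ec: "E \<in> carrier_mat n n" and Pc: "Pm \<in> carrier_mat n n" by (auto simp: E_def Pm_def)
  have EE: "E * E = E"
  proof (rule eq_matI)
    fix i j assume "i < dim_row E" "j < dim_col E"
    then have i: "i < n" and j: "j < n" by (auto simp: E_def)
    have "(E * E) $$ (i,j) = (\<Sum>k\<in>{0..<n}. (rat_of_int (c i k) / rat_of_int D) * (rat_of_int (c k j) / rat_of_int D))"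
      using i j by (simp add: E_def scalar_prod_def)
    also have "\<dots> = rat_of_int (\<Sum>k<n. c i k * c k j) / (rat_of_int D * rat_of_int D)"
      by (simp add: sum_divide_distrib atLeast0LessThan)
    also have "\<dots> = E $$ (i,j)" using i j D by (simp add: sq E_def)
    finally show "(E * E) $$ (i,j) = E $$ (i,j)" .
  qed (auto simp: E_def)
  have PE: "Pm * E = E * Pm"
  proof (rule eq_matI)
    fix i j assume "i < dim_row (E * Pm)" "j < dim_col (E * Pm)"
    then have i: "i < n" and j: "j < n" using Ec Pc by auto
    have ij: "inv_into UNIV \<sigma> j < n" and sj: "\<sigma> (inv_into UNIV \<sigma> j) = j"
      using permutes_in_image[OF permutes_inv[OF sig]] sig j by (auto simp: permutes_inverses(1))
    have "(Pm * E) $$ (i,j) = E $$ (\<sigma> i, j)" unfolding Pm_def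
      by (rule permm_mult_left[OF Ec sl i j])
    also have "\<dots> = E $$ (i, inv_into UNIV \<sigma> j)"
      using cinv[of i "inv_into UNIV \<sigma> j"] i j ij sj sl by (simp add: E_def)
    also have "\<dots> = (E * Pm) $$ (i,j)"
    proof -
      have "(E * Pm) $$ (i,j) = (\<Sum>k\<in>{0..<n}. E $$ (i,k) * (if j = \<sigma> k then 1 else 0))"
        using i j Ec by (simp add: Pm_def permm_def scalar_prod_def)
      also have "\<dots> = (\<Sum>k\<in>{0..<n}. if k = inv_into UNIV \<sigma> j then E $$ (i,k) else 0)"
        by (rule sum.cong) (use sig in \<open>auto simp: permutes_inv_eq\<close>)
      also have "\<dots> = E $$ (i, inv_into UNIV \<sigma> j)" using ij by simp
      finally show ?thesis by simp
    qed
    finally show "(Pm * E) $$ (i,j) = (E * Pm) $$ (i,j)" .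
  qed (use Ec Pc in auto)
  define M where "M = Pm * E"
  have Mc: "M \<in> carrier_mat n n" using Ec Pc by (simp add: M_def)
  have Mpow: "M ^\<^sub>m Suc k = Pm ^\<^sub>m Suc k * E" for k
  proof (induction k)
    case 0 then show ?case using Pc by (simp add: M_def)
  next
    case (Suc k)
    have P1: "Pm ^\<^sub>m Suc k \<in> carrier_mat n n" using Pc by (rule pow_carrier_mat)
    have "M ^\<^sub>m Suc (Suc k) = (Pm ^\<^sub>m Suc k * E) * (Pm * E)" using Suc by (simp add: M_def)
    also have "\<dots> = Pm ^\<^sub>m Suc k * (E * Pm) * E"
      using P1 Ec Pc by (simp add: assoc_mult_mat[of _ n n _ n _ n])
    also have "\<dots> = Pm ^\<^sub>m Suc k * (Pm * E) * E" by (simp add: PE)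
    also have "\<dots> = (Pm ^\<^sub>m Suc k * Pm) * (E * E)"
      using P1 Ec Pc by (simp add: assoc_mult_mat[of _ n n _ n _ n])
    also have "\<dots> = Pm ^\<^sub>m Suc (Suc k) * E" by (simp add: EE)
    finally show ?case .
  qed
  obtain m where m: "(\<sigma> ^^ m) = id" "m > 0"
    using permutation_is_nilpotent[of \<sigma>] sig unfolding permutation_permutes by blast
  have Pm_m: "Pm ^\<^sub>m m = 1\<^sub>m n"
  proof -
    have "Pm ^\<^sub>m m = permm n (\<sigma> ^^ m)" unfolding Pm_def by (rule permm_pow[OF sl])
    also have "\<dots> = 1\<^sub>m n" unfolding m by (rule eq_matI) (auto simp: permm_def)
    finally show ?thesis .
  qed
  have MM: "M ^\<^sub>m Suc m = M"
  proof -
    have "M ^\<^sub>m Suc m = (Pm ^\<^sub>m m * Pm) * E" using Mpow[of m] by simp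
    also have "\<dots> = M" using Pm_m Pc by (simp add: M_def)
    finally show ?thesis .
  qed
  define Mc :: "complex mat" where "Mc = map_mat of_rat M"
  have Mcc: "Mc \<in> carrier_mat n n" using Mc by (simp add: Mc_def)
  have MMc: "Mc ^\<^sub>m Suc m = Mc"
  proof -
    have "Mc ^\<^sub>m Suc m = map_mat of_rat (M ^\<^sub>m Suc m)"
      unfolding Mc_def by (rule of_rat_hom.mat_hom_pow[OF Mc, symmetric])
    then show ?thesis using MM by (simp add: Mc_def)
  qed
  obtain es where es: "char_poly Mc = (\<Prod>e\<leftarrow>es. [:- e, 1:])" "length es = n"
    using char_poly_factorized[OF Mcc] by blast
  define gC :: "complex poly" where "gC = monom 1 (Suc m) - monom 1 1"
  have root: "[:- e, 1:] dvd gC" if e: "e \<in> set es" for e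
  proof -
    have "poly (char_poly Mc) e = 0" unfolding es(1) using e
      by (simp add: poly_prod_list prod_list_zero_iff)
    then have "eigenvalue Mc e" using eigenvalue_root_char_poly[OF Mcc] by simp
    then obtain v where v: "eigenvector Mc v e" unfolding eigenvalue_def by blast
    have "Mc ^\<^sub>m Suc m *\<^sub>v v = e ^ Suc m \<cdot>\<^sub>v v" by (rule eigenvector_pow[OF Mcc v])
    then have "e ^ Suc m \<cdot>\<^sub>v v = e \<cdot>\<^sub>v v" using v MMc Mcc unfolding eigenvector_def by simp
    then have "e ^ Suc m = e" using v Mcc unfolding eigenvector_def
      by (intro smult_vec_cancel[of v n]) auto
    then have "poly gC e = 0" by (simp add: gC_def poly_monom)
    then show ?thesis by (simp add: poly_eq_0_iff_dvd)
  qed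
  have cdvd: "char_poly Mc dvd gC ^ n"
    using prod_list_dvd_power[of es gC] root es by simp
  have cpM: "char_poly Mc = map_poly of_rat (char_poly M)"
    unfolding Mc_def by (rule of_rat_hom.char_poly_hom[OF Mc])
  define gQ :: "rat poly" where "gQ = monom 1 (Suc m) - monom 1 1"
  define g :: "int poly" where "g = monom 1 (Suc m) - monom 1 1"
  interpret mq: map_poly_comm_ring_hom "of_rat :: rat \<Rightarrow> complex" ..
  have gQC: "map_poly of_rat (gQ ^ n) = gC ^ n"
    by (simp add: gQ_def gC_def mq.hom_power mq.hom_minus of_rat_hom.map_poly_hom_monom)
  have gZQ: "map_poly rat_of_int (g ^ n) = gQ ^ n"
    by (simp add: gQ_def g_def of_int_poly_hom.hom_power of_int_poly_hom.hom_minus of_int_hom.map_poly_hom_monom)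
  have dQ: "char_poly M dvd gQ ^ n"
    using cdvd unfolding cpM gQC[symmetric] by (rule of_rat_hom.dvd_map_poly_hom_imp_dvd)
  then obtain h where h: "gQ ^ n = char_poly M * h" by (elim dvdE)
  have cg: "coeff g (Suc m) = 1" using m(2) by (simp add: g_def coeff_monom)
  have dg: "degree g = Suc m"
  proof (rule antisym)
    show "degree g \<le> Suc m" unfolding g_def
      by (rule degree_diff_le) (auto intro: order.trans[OF degree_monom_le])
    show "Suc m \<le> degree g" using cg by (intro le_degree) simp
  qed
  have lg: "lead_coeff (g ^ n) = 1" using cg dg by (simp add: lead_coeff_power)
  have g0: "g ^ n \<noteq> 0" using cg by (auto simp: power_eq_0_iff)
  have cont: "content (g ^ n) = 1"
  proof -
    have "content (g ^ n) dvd 1" using content_dvd_coeff[of "g ^ n" "degree (g ^ n)"] lg by simp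
    then show ?thesis using content_ge_0_int[of "g ^ n"] by simp
  qed
  obtain r rg where rr: "rat_to_normalized_int_poly (char_poly M) = (r, rg)" by force
  obtain s sh where ss: "rat_to_normalized_int_poly h = (s, sh)" by force
  have fact: "g ^ n = rg * sh"
    by (rule rat_to_int_factor_content_1[OF cont _ rr ss g0]) (use gZQ h in simp)
  note R = rat_to_normalized_int_poly[OF rr]
  have lcM: "lead_coeff (char_poly M) = 1" and dM: "degree (char_poly M) = n"
    using degree_monic_char_poly[OF Mc] by auto
  have "lead_coeff rg * lead_coeff sh = 1" using fact lg by (simp add: lead_coeff_mult)
  then have lrg: "lead_coeff rg = 1 \<or> lead_coeff rg = -1" by (simp add: zmult_eq_1_iff) blast
  have "lead_coeff (char_poly M) = r * rat_of_int (lead_coeff rg)"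
    using R(1,4) by (metis R(1) coeff_smult of_int_hom.coeff_map_poly_hom)
  with lcM R(2) lrg have r1: "r = 1" by auto
  have cpZ: "char_poly M = map_poly rat_of_int rg" using R(1) r1 by simp
  have esn: "es \<noteq> []" using es(2) False by auto
  have c1: "coeff (char_poly Mc) (n-1) = - sum_list es"
    unfolding es(1) using prod_linear_coeff[OF esn] es(2) by simp
  have c2: "coeff (char_poly Mc) (n-1) = of_rat (rat_of_int (coeff rg (n-1)))"
    unfolding cpM cpZ by (simp add: of_rat_hom.coeff_map_poly_hom of_int_hom.coeff_map_poly_hom)
  obtain B P Q where BPQ: "schur_decomposition Mc es = (B,P,Q)" by (cases "schur_decomposition Mc es") auto
  from schur_decomposition[OF Mcc es(1) BPQ]
  have sim: "similar_mat_wit Mc B P Q" and dB: "diag_mat B = es" by auto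
  have Bc: "B \<in> carrier_mat n n" using sim Mcc unfolding similar_mat_wit_def Let_def by auto
  have t1: "mtrace Mc = sum_list es"
    using mtrace_similar[OF sim Mcc] mtrace_upper[OF Bc] dB by simp
  have t2: "mtrace Mc = of_rat (mtrace M)"
    using Mc unfolding mtrace_def Mc_def by (simp add: of_rat_sum)
  have t3: "mtrace M = (\<Sum>i<n. rat_of_int (c (\<sigma> i) i) / rat_of_int D)"
  proof -
    have "mtrace M = (\<Sum>i<n. (Pm * E) $$ (i,i))" using Mc Pc by (simp add: mtrace_def M_def)
    also have "\<dots> = (\<Sum>i<n. E $$ (\<sigma> i, i))"
      by (rule sum.cong) (use permm_mult_left[OF Ec sl] in \<open>auto simp: Pm_def\<close>)
    also have "\<dots> = (\<Sum>i<n. rat_of_int (c (\<sigma> i) i) / rat_of_int D)"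
      by (rule sum.cong) (use sl in \<open>auto simp: E_def\<close>)
    finally show ?thesis .
  qed
  have "of_rat (mtrace M) = (of_rat (rat_of_int (- coeff rg (n-1))) :: complex)"
  proof -
    have "sum_list es = - coeff (char_poly Mc) (n-1)" using c1 by simp
    then show ?thesis using t1 t2 c2 by (simp add: of_rat_minus)
  qed
  then have "mtrace M = rat_of_int (- coeff rg (n-1))" by (simp only: of_rat_eq_iff)
  then have "rat_of_int (\<Sum>i<n. c (\<sigma> i) i) = rat_of_int (D * (- coeff rg (n-1)))"
    using t3 D by (simp add: sum_divide_distrib[symmetric] field_simps)
  then have "(\<Sum>i<n. c (\<sigma> i) i) = D * (- coeff rg (n-1))" by (simp only: of_int_eq_iff)
  then show ?thesis by simp
qed



definition bb :: "'l set \<Rightarrow> ('p \<Rightarrow> 'l \<Rightarrow> bool) \<Rightarrow> 'p \<Rightarrow> 'p \<Rightarrow> nat" where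
  "bb Ls I y z = card {l\<in>Ls. I y l \<and> I z l}"

context
  fixes P :: "'p set" and Ls :: "'l set" and I :: "'p \<Rightarrow> 'l \<Rightarrow> bool" and s t :: nat
  assumes gq: "finite_GQ P Ls I s t"
begin


lemma finP: "finite P" and finL: "finite Ls"
  and cardpts: "l \<in> Ls \<Longrightarrow> card {p\<in>P. I p l} = s + 1"
  and cardlns: "p \<in> P \<Longrightarrow> card {l\<in>Ls. I p l} = t + 1"
  and two: "p \<in> P \<Longrightarrow> q \<in> P \<Longrightarrow> p \<noteq> q \<Longrightarrow> card {l\<in>Ls. I p l \<and> I q l} \<le> 1"
  and ax: "p \<in> P \<Longrightarrow> l \<in> Ls \<Longrightarrow> \<not> I p l \<Longrightarrow> \<exists>!q. q \<in> P \<and> I q l \<and> collinear P Ls I p q"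
  using gq unfolding finite_GQ_def by auto

lemma two_lines:
  assumes "p \<in> P" "q \<in> P" "p \<noteq> q" "l \<in> Ls" "m \<in> Ls" "I p l" "I q l" "I p m" "I q m"
  shows "l = m"
proof (rule ccontr)
  assume "l \<noteq> m"
  then have "{l, m} \<subseteq> {l\<in>Ls. I p l \<and> I q l}" using assms by auto
  then have "card {l, m} \<le> card {l\<in>Ls. I p l \<and> I q l}" using finL by (intro card_mono) auto
  then show False using two[OF assms(1-3)] \<open>l \<noteq> m\<close> by simp
qed

lemma collinear_sym: "collinear P Ls I p q \<longleftrightarrow> collinear P Ls I q p"
  unfolding collinear_def by auto

lemma bb_self: "y \<in> P \<Longrightarrow> bb Ls I y y = t + 1"
  using cardlns by (simp add: bb_def)

lemma bb_coll:
  assumes "y \<in> P" "z \<in> P" "y \<noteq> z" "collinear P Ls I y z"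
  shows "bb Ls I y z = 1"
proof -
  obtain l where l: "l \<in> Ls" "I y l" "I z l" using assms(4) unfolding collinear_def by blast
  have "{l\<in>Ls. I y l \<and> I z l} = {l}" using l two_lines[OF assms(1-3)] by auto
  then show ?thesis by (simp add: bb_def)
qed

lemma bb_ncoll:
  assumes "\<not> collinear P Ls I y z"
  shows "bb Ls I y z = 0"
proof -
  have eq: "{l\<in>Ls. I y l \<and> I z l} = {}" using assms unfolding collinear_def by auto
  show ?thesis unfolding bb_def by (subst eq) simp
qed

lemma bb_sym: "bb Ls I y z = bb Ls I z y"
  unfolding bb_def by (metis (lifting) conj_commute)

lemma swap_sum:
  fixes f :: "'p \<Rightarrow> int"
  assumes y: "y \<in> P"
  shows "(\<Sum>k\<in>P. int (bb Ls I y k) * f k) = (\<Sum>l\<in>{l\<in>Ls. I y l}. \<Sum>k\<in>{p\<in>P. I p l}. f k)"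
proof -
  have "(\<Sum>k\<in>P. int (bb Ls I y k) * f k) = (\<Sum>k\<in>P. \<Sum>l\<in>{l\<in>Ls. I y l}. if I k l then f k else 0)"
  proof (rule sum.cong[OF refl])
    fix k assume "k \<in> P"
    have fin: "finite {l\<in>Ls. I y l}" using finL by simp
    have "(\<Sum>l\<in>{l\<in>Ls. I y l}. if I k l then f k else 0) = (\<Sum>l\<in>{l\<in>{l\<in>Ls. I y l}. I k l}. f k)"
      by (rule sum.inter_filter[symmetric, OF fin])
    also have "{l\<in>{l\<in>Ls. I y l}. I k l} = {l\<in>Ls. I y l \<and> I k l}" by auto
    also have "(\<Sum>l\<in>{l\<in>Ls. I y l \<and> I k l}. f k) = int (bb Ls I y k) * f k"
      by (simp add: bb_def)
    finally show "int (bb Ls I y k) * f k = (\<Sum>l\<in>{l\<in>Ls. I y l}. if I k l then f k else 0)" by simp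
  qed
  also have "\<dots> = (\<Sum>l\<in>{l\<in>Ls. I y l}. \<Sum>k\<in>P. if I k l then f k else 0)"
    by (rule sum.swap)
  also have "\<dots> = (\<Sum>l\<in>{l\<in>Ls. I y l}. \<Sum>k\<in>{p\<in>P. I p l}. f k)"
    using finP by (simp add: sum.inter_filter)
  finally show ?thesis .
qed

lemma lam:
  assumes z: "z \<in> P" and l: "l \<in> Ls"
  shows "(\<Sum>k\<in>{p\<in>P. I p l}. int (bb Ls I k z)) = (if I z l then int s + int t + 1 else 1)"
proof (cases "I z l")
  case True
  have fin: "finite {p\<in>P. I p l}" using finP by simp
  have zin: "z \<in> {p\<in>P. I p l}" using z True by simp
  have "(\<Sum>k\<in>{p\<in>P. I p l}. int (bb Ls I k z)) = int (bb Ls I z z) + (\<Sum>k\<in>{p\<in>P. I p l} - {z}. int (bb Ls I k z))"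
    using fin zin by (simp add: sum.remove)
  also have "(\<Sum>k\<in>{p\<in>P. I p l} - {z}. int (bb Ls I k z)) = (\<Sum>k\<in>{p\<in>P. I p l} - {z}. 1)"
  proof (rule sum.cong[OF refl])
    fix k assume k: "k \<in> {p\<in>P. I p l} - {z}"
    have "collinear P Ls I k z" using k l True unfolding collinear_def by auto
    then show "int (bb Ls I k z) = 1" using bb_coll[of k z] k z by auto
  qed
  also have "\<dots> = int s" using fin zin cardpts[OF l] by simp
  finally show ?thesis using True bb_self[OF z] by simp
next
  case False
  have fin: "finite {p\<in>P. I p l}" using finP by simp
  obtain q where q: "q \<in> P" "I q l" "collinear P Ls I z q"
    and uq: "\<And>q'. q' \<in> P \<Longrightarrow> I q' l \<Longrightarrow> collinear P Ls I z q' \<Longrightarrow> q' = q"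
    using ax[OF z l False] by blast
  have "(\<Sum>k\<in>{p\<in>P. I p l}. int (bb Ls I k z)) = (\<Sum>k\<in>{p\<in>P. I p l}. if k = q then 1 else 0)"
  proof (rule sum.cong[OF refl])
    fix k assume k: "k \<in> {p\<in>P. I p l}"
    have kz: "k \<noteq> z" using k False by auto
    show "int (bb Ls I k z) = (if k = q then 1 else 0)"
    proof (cases "k = q")
      case True
      then show ?thesis using bb_coll[of k z] kz k z q(3) collinear_sym by auto
    next
      case kq: False
      then have "\<not> collinear P Ls I k z" using uq[of k] k collinear_sym by auto
      then show ?thesis using bb_ncoll kq by simp
    qed
  qed
  also have "\<dots> = 1" using fin q by simp
  finally show ?thesis using False by simp
qed

lemma C1:
  assumes y: "y \<in> P" and z: "z \<in> P"
  shows "(\<Sum>k\<in>P. int (bb Ls I y k) * int (bb Ls I k z)) = (int s + int t) * int (bb Ls I y z) + int t + 1"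
proof -
  have finy: "finite {l\<in>Ls. I y l}" using finL by simp
  have "(\<Sum>k\<in>P. int (bb Ls I y k) * int (bb Ls I k z)) = (\<Sum>l\<in>{l\<in>Ls. I y l}. \<Sum>k\<in>{p\<in>P. I p l}. int (bb Ls I k z))"
    by (rule swap_sum[OF y])
  also have "\<dots> = (\<Sum>l\<in>{l\<in>Ls. I y l}. 1 + (int s + int t) * (if I z l then 1 else 0))"
    by (rule sum.cong[OF refl]) (use lam[OF z] in auto)
  also have "\<dots> = int (card {l\<in>Ls. I y l}) + (int s + int t) * (\<Sum>l\<in>{l\<in>Ls. I y l}. if I z l then 1 else 0)"
    by (simp add: sum.distrib sum_distrib_left)
  also have "(\<Sum>l\<in>{l\<in>Ls. I y l}. if I z l then 1 else 0) = (\<Sum>l\<in>{l\<in>{l\<in>Ls. I y l}. I z l}. (1::int))"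
    by (rule sum.inter_filter[symmetric, OF finy])
  also have "{l\<in>{l\<in>Ls. I y l}. I z l} = {l\<in>Ls. I y l \<and> I z l}" by auto
  finally show ?thesis using cardlns[OF y] by (simp add: bb_def)
qed

lemma C2:
  assumes y: "y \<in> P"
  shows "(\<Sum>k\<in>P. int (bb Ls I y k)) = (int s + 1) * (int t + 1)"
proof -
  have "(\<Sum>k\<in>P. int (bb Ls I y k)) = (\<Sum>k\<in>P. int (bb Ls I y k) * 1)" by simp
  also have "\<dots> = (\<Sum>l\<in>{l\<in>Ls. I y l}. \<Sum>k\<in>{p\<in>P. I p l}. 1)" by (rule swap_sum[OF y])
  also have "\<dots> = (\<Sum>l\<in>{l\<in>Ls. I y l}. int s + 1)"
    by (rule sum.cong[OF refl]) (use cardpts in auto)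
  finally show ?thesis using cardlns[OF y] by simp
qed

lemma cardP:
  assumes y: "y \<in> P"
  shows "int (card P) = (int s + 1) * (int s * int t + 1)"
proof -
  let ?b = "\<lambda>u v. int (bb Ls I u v)"
  have "(\<Sum>z\<in>P. \<Sum>k\<in>P. ?b y k * ?b k z) = (\<Sum>k\<in>P. ?b y k * (\<Sum>z\<in>P. ?b k z))"
    by (subst sum.swap) (simp add: sum_distrib_left)
  also have "\<dots> = (\<Sum>k\<in>P. ?b y k * ((int s + 1) * (int t + 1)))"
    by (rule sum.cong[OF refl]) (use C2 in auto)
  also have "\<dots> = ((int s + 1) * (int t + 1)) * ((int s + 1) * (int t + 1))"
    using C2[OF y] by (simp add: sum_distrib_right[symmetric])
  finally have A: "(\<Sum>z\<in>P. \<Sum>k\<in>P. ?b y k * ?b k z) = ((int s + 1) * (int t + 1)) * ((int s + 1) * (int t + 1))" .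
  have "(\<Sum>z\<in>P. \<Sum>k\<in>P. ?b y k * ?b k z) = (\<Sum>z\<in>P. (int s + int t) * ?b y z + (int t + 1))"
    by (rule sum.cong[OF refl]) (use C1[OF y] in \<open>auto simp: add.assoc\<close>)
  also have "\<dots> = (int s + int t) * ((int s + 1) * (int t + 1)) + (int t + 1) * int (card P)"
    using C2[OF y] by (simp add: sum.distrib sum_distrib_left[symmetric] mult.commute)
  finally have B: "(\<Sum>z\<in>P. \<Sum>k\<in>P. ?b y k * ?b k z) = (int s + int t) * ((int s + 1) * (int t + 1)) + (int t + 1) * int (card P)" .
  from A B have "(int t + 1) * int (card P) = (int t + 1) * ((int s + 1) * (int s * int t + 1))"
    by (simp add: algebra_simps)
  then show ?thesis by simp
qed


lemma aut_bb:
  assumes aut: "automorphism P Ls I a" and y: "y \<in> P" and z: "z \<in> P"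
  shows "bb Ls I (fst a y) (fst a z) = bb Ls I y z"
proof -
  have bl: "bij_betw (snd a) Ls Ls" and inc: "\<forall>p\<in>P. \<forall>l\<in>Ls. I p l \<longleftrightarrow> I (fst a p) (snd a l)"
    using aut unfolding automorphism_def by auto
  have eq: "{l\<in>Ls. I (fst a y) l \<and> I (fst a z) l} = snd a ` {l\<in>Ls. I y l \<and> I z l}"
  proof
    show "snd a ` {l\<in>Ls. I y l \<and> I z l} \<subseteq> {l\<in>Ls. I (fst a y) l \<and> I (fst a z) l}"
      using inc y z bij_betwE[OF bl] by auto
  next
    show "{l\<in>Ls. I (fst a y) l \<and> I (fst a z) l} \<subseteq> snd a ` {l\<in>Ls. I y l \<and> I z l}"
    proof
      fix l assume l: "l \<in> {l\<in>Ls. I (fst a y) l \<and> I (fst a z) l}"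
      then obtain l' where l': "l' \<in> Ls" "l = snd a l'" using bl unfolding bij_betw_def by auto
      then show "l \<in> snd a ` {l\<in>Ls. I y l \<and> I z l}" using l inc y z by auto
    qed
  qed
  have "inj_on (snd a) {l\<in>Ls. I y l \<and> I z l}"
    using bl unfolding bij_betw_def by (auto intro: inj_on_subset)
  then show ?thesis unfolding bb_def eq by (simp add: card_image)
qed

lemma benson:
  assumes aut: "automorphism P Ls I a" and y0: "y0 \<in> P" and st0: "s + t > 0"
  shows "int s + int t dvd int (\<Sum>y\<in>P. bb Ls I y (fst a y)) - (int s * int t + 1)"
proof -
  define N where "N = card P"
  obtain h where h: "bij_betw h {0..<N} P" using ex_bij_betw_nat_finite[OF finP] unfolding N_def by blast
  have h': "bij_betw h {..<N} P" using h by (simp add: atLeast0LessThan)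
  define g where "g = fst a"
  have bg: "bij_betw g P P" using aut unfolding automorphism_def g_def by auto
  define hi where "hi = the_inv_into {..<N} h"
  have bhi: "bij_betw hi P {..<N}" unfolding hi_def by (rule bij_betw_the_inv_into[OF h'])
  define \<sigma> where "\<sigma> i = (if i < N then hi (g (h i)) else i)" for i
  have bs: "bij_betw \<sigma> {..<N} {..<N}"
  proof -
    have "bij_betw (hi \<circ> (g \<circ> h)) {..<N} {..<N}"
      by (rule bij_betw_trans[OF bij_betw_trans[OF h' bg] bhi])
    moreover have "\<And>i. i \<in> {..<N} \<Longrightarrow> (hi \<circ> (g \<circ> h)) i = \<sigma> i" by (simp add: \<sigma>_def)
    ultimately show ?thesis using bij_betw_cong by blast
  qed
  have sig: "\<sigma> permutes {..<N}" by (rule bij_imp_permutes[OF bs]) (simp add: \<sigma>_def)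
  have hs: "h (\<sigma> i) = g (h i)" if "i < N" for i
  proof -
    have "h i \<in> P" using h' that bij_betwE by blast
    then have "g (h i) \<in> P" using bg bij_betwE by blast
    then show ?thesis using that unfolding \<sigma>_def hi_def by (simp add: f_the_inv_into_f_bij_betw[OF h'])
  qed
  have hP: "h i \<in> P" if "i < N" for i using h' that bij_betwE by blast
  define c where "c i j = (int s + 1) * int (bb Ls I (h i) (h j)) - 1" for i j
  define D where "D = (int s + 1) * (int s + int t)"
  have reidx: "(\<Sum>k<N. F (h k)) = (\<Sum>k\<in>P. F k)" for F :: "'p \<Rightarrow> int"
    by (rule sum.reindex_bij_betw[OF h'])
  have cP: "int N = (int s + 1) * (int s * int t + 1)" unfolding N_def by (rule cardP[OF y0])
  have sq: "(\<Sum>k<N. c i k * c k j) = D * c i j" if i: "i < N" and j: "j < N" for i j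
  proof -
    let ?y = "h i" and ?z = "h j"
    have y: "?y \<in> P" and z: "?z \<in> P" using hP i j by auto
    let ?b = "\<lambda>u v. int (bb Ls I u v)"
    have "(\<Sum>k<N. c i k * c k j) = (\<Sum>k\<in>P. ((int s + 1) * ?b ?y k - 1) * ((int s + 1) * ?b k ?z - 1))"
      unfolding c_def by (rule reidx)
    also have "\<dots> = (\<Sum>k\<in>P. (int s + 1)^2 * (?b ?y k * ?b k ?z) - (int s + 1) * ?b ?y k - (int s + 1) * ?b ?z k + 1)"
      by (rule sum.cong[OF refl]) (simp add: algebra_simps power2_eq_square bb_sym)
    also have "\<dots> = (int s + 1)^2 * (\<Sum>k\<in>P. ?b ?y k * ?b k ?z) - (int s + 1) * (\<Sum>k\<in>P. ?b ?y k) - (int s + 1) * (\<Sum>k\<in>P. ?b ?z k) + int N"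
      by (simp add: sum.distrib sum_subtractf sum_distrib_left N_def)
    also have "\<dots> = D * c i j"
      unfolding C1[OF y z] C2[OF y] C2[OF z] cP D_def c_def by (simp add: algebra_simps power2_eq_square)
    finally show ?thesis .
  qed
  have D0: "D \<noteq> 0" unfolding D_def using st0 by (simp add: add_nonneg_eq_0_iff)
  have cinv: "c (\<sigma> i) (\<sigma> j) = c i j" if "i < N" "j < N" for i j
    unfolding c_def using hs[OF that(1)] hs[OF that(2)] aut_bb[OF aut hP[OF that(1)] hP[OF that(2)]]
    by (simp add: g_def)
  have "D dvd (\<Sum>i<N. c (\<sigma> i) i)" by (rule LA_main[OF sig sq D0 cinv])
  also have "(\<Sum>i<N. c (\<sigma> i) i) = (\<Sum>i<N. (int s + 1) * int (bb Ls I (h i) (g (h i))) - 1)"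
    by (rule sum.cong[OF refl]) (simp add: c_def hs bb_sym)
  also have "\<dots> = (\<Sum>y\<in>P. (int s + 1) * int (bb Ls I y (g y)) - 1)" by (rule reidx)
  also have "\<dots> = (int s + 1) * (int (\<Sum>y\<in>P. bb Ls I y (fst a y)) - (int s * int t + 1))"
    using cP by (simp add: sum_subtractf sum_distrib_left[symmetric] g_def N_def algebra_simps)
  finally have "(int s + 1) * (int s + int t) dvd (int s + 1) * (int (\<Sum>y\<in>P. bb Ls I y (fst a y)) - (int s * int t + 1))"
    by (simp add: D_def)
  then show ?thesis by (subst (asm) dvd_mult_cancel_left) simp
qed

lemma Tform:
  assumes aut: "automorphism P Ls I a" and x: "x \<in> P"
    and fixx: "\<forall>l\<in>Ls. I x l \<longrightarrow> snd a l = l"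
    and La: "La \<in> Ls" "I x La"
    and fixLa: "\<forall>q\<in>P. fst a q = q \<longrightarrow> I q La"
  shows "int (\<Sum>y\<in>P. bb Ls I y (fst a y)) =
         int t * int (card {q\<in>P. I q La \<and> fst a q = q}) + (1 + (int t + 1) * int s)
         + int s * int (card {l\<in>Ls. \<not> I x l \<and> snd a l = l})"
proof -
  have bP: "bij_betw (fst a) P P" and bL: "bij_betw (snd a) Ls Ls"
    and inc: "\<And>p l. p \<in> P \<Longrightarrow> l \<in> Ls \<Longrightarrow> I p l \<longleftrightarrow> I (fst a p) (snd a l)"
    using aut unfolding automorphism_def by auto
  have aP: "fst a p \<in> P" if "p \<in> P" for p using bP that bij_betwE by blast
  have aL: "snd a l \<in> Ls" if "l \<in> Ls" for l using bL that bij_betwE by blast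
  have injP: "inj_on (fst a) P" using bP bij_betw_def by blast
  define F where "F = {q\<in>P. I q La \<and> fst a q = q}"
  define X where "X = {q\<in>P. collinear P Ls I x q}"
  define Far where "Far = P - X"
  define FL where "FL = {l\<in>Ls. \<not> I x l \<and> snd a l = l}"
  have finX: "finite X" and finF: "finite F" and finFar: "finite Far" and finFL: "finite FL"
    using finP finL by (auto simp: X_def F_def Far_def FL_def)
  have FX: "F \<subseteq> X" using La unfolding F_def X_def collinear_def by auto
  have XP: "X \<subseteq> P" by (auto simp: X_def)
  have fixF: "fst a y = y \<longleftrightarrow> y \<in> F" if "y \<in> P" for y using fixLa that by (auto simp: F_def)
  have aX: "fst a y \<in> X" if y: "y \<in> X" for y
  proof -
    from y obtain L where L: "L \<in> Ls" "I x L" "I y L" and yP: "y \<in> P"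
      unfolding X_def collinear_def by auto
    have "I (fst a y) (snd a L)" using inc[OF yP L(1)] L by simp
    then have "I (fst a y) L" using fixx L by simp
    then show ?thesis using L aP[OF yP] unfolding X_def collinear_def by auto
  qed
  have aXeq: "fst a ` X = X"
  proof -
    have sub: "fst a ` X \<subseteq> X" using aX by auto
    have "card (fst a ` X) = card X" using inj_on_subset[OF injP XP] by (simp add: card_image)
    then show ?thesis using sub finX by (simp add: card_subset_eq)
  qed
  have aFar: "fst a y \<in> Far" if y: "y \<in> Far" for y
  proof (rule ccontr)
    assume "fst a y \<notin> Far"
    then have "fst a y \<in> X" using y aP unfolding Far_def by auto
    then obtain y' where y': "y' \<in> X" "fst a y' = fst a y" using aXeq by force
    then have "y' = y" using injP y XP unfolding Far_def inj_on_def by auto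
    then show False using y y' unfolding Far_def by auto
  qed
  have sumF: "(\<Sum>y\<in>F. bb Ls I y (fst a y)) = (t + 1) * card F"
    using bb_self by (simp add: F_def)
  have sumXF: "(\<Sum>y\<in>X - F. bb Ls I y (fst a y)) = card (X - F)"
  proof -
    have "(\<Sum>y\<in>X - F. bb Ls I y (fst a y)) = (\<Sum>y\<in>X - F. 1)"
    proof (rule sum.cong[OF refl])
      fix y assume y: "y \<in> X - F"
      then have yP: "y \<in> P" using XP by auto
      have ne: "y \<noteq> fst a y" using fixF[OF yP] y by auto
      from y obtain L where L: "L \<in> Ls" "I x L" "I y L" unfolding X_def collinear_def by auto
      have "I (fst a y) (snd a L)" using inc[OF yP L(1)] L by simp
      then have "I (fst a y) L" using fixx L by simp
      then have "collinear P Ls I y (fst a y)" using L unfolding collinear_def by auto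
      then show "bb Ls I y (fst a y) = 1" using bb_coll[OF yP aP[OF yP] ne] by simp
    qed
    then show ?thesis by simp
  qed
  have sumX: "(\<Sum>y\<in>X. bb Ls I y (fst a y)) = (t + 1) * card F + card (X - F)"
  proof -
    have "(\<Sum>y\<in>X. bb Ls I y (fst a y)) = (\<Sum>y\<in>F. bb Ls I y (fst a y)) + (\<Sum>y\<in>X - F. bb Ls I y (fst a y))"
      using finX FX by (metis sum.subset_diff add.commute)
    then show ?thesis using sumF sumXF by simp
  qed
  have cXF: "card (X - F) = card X - card F" using FX finF by (simp add: card_Diff_subset)
  have cFX: "card F \<le> card X" using FX finX by (simp add: card_mono)
  have cardX: "card X = 1 + (t + 1) * s"
  proof -
    define A where "A L = {p\<in>P. I p L} - {x}" for L
    have XU: "X = insert x (\<Union>L\<in>{l\<in>Ls. I x l}. A L)"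
      unfolding X_def A_def collinear_def using x La by auto
    have xn: "x \<notin> (\<Union>L\<in>{l\<in>Ls. I x l}. A L)" by (auto simp: A_def)
    have cA: "card (A L) = s" if "L \<in> {l\<in>Ls. I x l}" for L
      using that cardpts[of L] x finP by (simp add: A_def card_Diff_singleton)
    have disj: "\<forall>i\<in>{l\<in>Ls. I x l}. \<forall>j\<in>{l\<in>Ls. I x l}. i \<noteq> j \<longrightarrow> A i \<inter> A j = {}"
      using two_lines x by (auto simp: A_def)
    have "card (\<Union>L\<in>{l\<in>Ls. I x l}. A L) = (\<Sum>L\<in>{l\<in>Ls. I x l}. card (A L))"
      by (rule card_UN_disjoint) (use finL finP disj in \<open>auto simp: A_def\<close>)
    also have "\<dots> = (t + 1) * s" using cA cardlns[OF x] by simp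
    finally have "card (\<Union>L\<in>{l\<in>Ls. I x l}. A L) = (t + 1) * s" .
    moreover have "finite (\<Union>L\<in>{l\<in>Ls. I x l}. A L)"
      by (rule finite_subset[of _ P]) (auto simp: A_def finP)
    ultimately show ?thesis unfolding XU using xn by simp
  qed
  have farP: "y \<in> P" if "y \<in> Far" for y using that by (simp add: Far_def)
  have farne: "fst a y \<noteq> y" if y: "y \<in> Far" for y
  proof
    assume "fst a y = y"
    then have "y \<in> F" using fixF[OF farP[OF y]] by simp
    then show False using FX y by (auto simp: Far_def)
  qed
  have farnc: "\<not> collinear P Ls I x y" if "y \<in> Far" for y using that by (simp add: Far_def X_def)
  have cM: "card {y\<in>Far. I y M} = s" if M: "M \<in> FL" for M
  proof -
    have Mls: "M \<in> Ls" and nxM: "\<not> I x M" using M by (auto simp: FL_def)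
    obtain q where q: "q \<in> P" "I q M" "collinear P Ls I x q"
      and uq: "\<And>q'. q' \<in> P \<Longrightarrow> I q' M \<Longrightarrow> collinear P Ls I x q' \<Longrightarrow> q' = q"
      using ax[OF x Mls nxM] by blast
    have "{y\<in>Far. I y M} = {p\<in>P. I p M} - {q}"
    proof (intro equalityI subsetI)
      fix y assume "y \<in> {y\<in>Far. I y M}"
      then show "y \<in> {p\<in>P. I p M} - {q}" using q(3) unfolding Far_def X_def by auto
    next
      fix y assume y: "y \<in> {p\<in>P. I p M} - {q}"
      then have "\<not> collinear P Ls I x y" using uq[of y] by auto
      then show "y \<in> {y\<in>Far. I y M}" using y unfolding Far_def X_def by auto
    qed
    then show ?thesis using cardpts[OF Mls] q finP by (simp add: card_Diff_singleton)
  qed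
  have key: "{y\<in>Far. collinear P Ls I y (fst a y)} = (\<Union>M\<in>FL. {y\<in>Far. I y M})"
  proof
    show "(\<Union>M\<in>FL. {y\<in>Far. I y M}) \<subseteq> {y\<in>Far. collinear P Ls I y (fst a y)}"
    proof
      fix y assume "y \<in> (\<Union>M\<in>FL. {y\<in>Far. I y M})"
      then obtain M where M: "M \<in> FL" "y \<in> Far" "I y M" by auto
      have Mls: "M \<in> Ls" and fM: "snd a M = M" using M by (auto simp: FL_def)
      have "I (fst a y) M" using inc[OF farP[OF M(2)] Mls] M(3) fM by simp
      then show "y \<in> {y\<in>Far. collinear P Ls I y (fst a y)}"
        using M Mls unfolding collinear_def by auto
    qed
  next
    show "{y\<in>Far. collinear P Ls I y (fst a y)} \<subseteq> (\<Union>M\<in>FL. {y\<in>Far. I y M})"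
    proof
      fix y assume "y \<in> {y\<in>Far. collinear P Ls I y (fst a y)}"
      then have yF: "y \<in> Far" and col: "collinear P Ls I y (fst a y)" by auto
      have yP: "y \<in> P" using farP[OF yF] .
      have ayF: "fst a y \<in> Far" using aFar[OF yF] .
      obtain M where M: "M \<in> Ls" "I y M" "I (fst a y) M" using col unfolding collinear_def by auto
      have nxM: "\<not> I x M" using M farnc[OF yF] x yP unfolding collinear_def by auto
      obtain m where m: "m \<in> P" "I m M" "collinear P Ls I x m"
        using ax[OF x M(1) nxM] by blast
      obtain L where L: "L \<in> Ls" "I x L" "I m L" using m(3) unfolding collinear_def by auto
      have amP: "fst a m \<in> P" using aP[OF m(1)] .
      have aM: "snd a M \<in> Ls" using aL[OF M(1)] .
      have amaM: "I (fst a m) (snd a M)" using inc[OF m(1) M(1)] m(2) by simp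
      have ay_aM: "I (fst a y) (snd a M)" using inc[OF yP M(1)] M(2) by simp
      have amL: "I (fst a m) L" using inc[OF m(1) L(1)] L fixx by simp
      have fixM: "snd a M = M"
      proof (cases "fst a m = m")
        case True
        have ne: "m \<noteq> fst a y" using m(3) farnc[OF ayF] by auto
        have mM: "I m (snd a M)" using amaM True by simp
        have "M = snd a M" by (rule two_lines[OF m(1) aP[OF yP] ne M(1) aM m(2) M(3) mM ay_aM])
        then show ?thesis by simp
      next
        case False
        have nayL: "\<not> I (fst a y) L" using farnc[OF ayF] L unfolding collinear_def by auto
        have c1: "collinear P Ls I (fst a y) m" using M m(2) unfolding collinear_def by auto
        have c2: "collinear P Ls I (fst a y) (fst a m)" using aM amaM ay_aM unfolding collinear_def by auto
        from ax[OF aP[OF yP] L(1) nayL] have "\<exists>!q. q \<in> P \<and> I q L \<and> collinear P Ls I (fst a y) q" .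
        then obtain q where "q \<in> P \<and> I q L \<and> collinear P Ls I (fst a y) q"
          and uq: "\<forall>q'. q' \<in> P \<and> I q' L \<and> collinear P Ls I (fst a y) q' \<longrightarrow> q' = q"
          by (rule ex1E) blast
        have "m = q" using uq c1 m(1) L(3) by blast
        moreover have "fst a m = q" using uq c2 amP amL by blast
        ultimately have "m = fst a m" by simp
        then show ?thesis using False by simp
      qed
      have "M \<in> FL" using M(1) nxM fixM by (simp add: FL_def)
      then show "y \<in> (\<Union>M\<in>FL. {y\<in>Far. I y M})" using yF M(2) by auto
    qed
  qed
  have disjFL: "\<forall>i\<in>FL. \<forall>j\<in>FL. i \<noteq> j \<longrightarrow> {y\<in>Far. I y i} \<inter> {y\<in>Far. I y j} = {}"
  proof (intro ballI impI)
    fix i j assume i: "i \<in> FL" and j: "j \<in> FL" and ij: "i \<noteq> j"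
    show "{y\<in>Far. I y i} \<inter> {y\<in>Far. I y j} = {}"
    proof (rule ccontr)
      assume "{y\<in>Far. I y i} \<inter> {y\<in>Far. I y j} \<noteq> {}"
      then obtain y where y: "y \<in> Far" "I y i" "I y j" by auto
      have iL: "i \<in> Ls" "snd a i = i" and jL: "j \<in> Ls" "snd a j = j" using i j by (auto simp: FL_def)
      have "I (fst a y) i" using inc[OF farP[OF y(1)] iL(1)] y(2) iL(2) by simp
      moreover have "I (fst a y) j" using inc[OF farP[OF y(1)] jL(1)] y(3) jL(2) by simp
      ultimately have "i = j"
        using two_lines[OF farP[OF y(1)] aP[OF farP[OF y(1)]] farne[OF y(1), symmetric] iL(1) jL(1) y(2)] y(3)
        by auto
      then show False using ij by simp
    qed
  qed
  have cardkey: "card {y\<in>Far. collinear P Ls I y (fst a y)} = s * card FL"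
  proof -
    have "card (\<Union>M\<in>FL. {y\<in>Far. I y M}) = (\<Sum>M\<in>FL. card {y\<in>Far. I y M})"
      by (rule card_UN_disjoint) (use finFL finFar disjFL in auto)
    also have "\<dots> = (\<Sum>M\<in>FL. s)" using cM by simp
    finally show ?thesis unfolding key by simp
  qed
  have sumFar: "(\<Sum>y\<in>Far. bb Ls I y (fst a y)) = s * card FL"
  proof -
    have "(\<Sum>y\<in>Far. bb Ls I y (fst a y)) = (\<Sum>y\<in>Far. if collinear P Ls I y (fst a y) then 1 else 0)"
    proof (rule sum.cong[OF refl])
      fix y assume y: "y \<in> Far"
      show "bb Ls I y (fst a y) = (if collinear P Ls I y (fst a y) then 1 else 0)"
        using bb_coll[OF farP[OF y] aP[OF farP[OF y]] farne[OF y, symmetric]] bb_ncoll by auto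
    qed
    also have "\<dots> = (\<Sum>y\<in>{y\<in>Far. collinear P Ls I y (fst a y)}. 1)"
      by (rule sum.inter_filter[symmetric, OF finFar])
    also have "\<dots> = card {y\<in>Far. collinear P Ls I y (fst a y)}" by simp
    finally show ?thesis using cardkey by simp
  qed
  have PXF: "P = X \<union> Far" "X \<inter> Far = {}" using XP by (auto simp: Far_def)
  have "(\<Sum>y\<in>P. bb Ls I y (fst a y)) = (\<Sum>y\<in>X. bb Ls I y (fst a y)) + (\<Sum>y\<in>Far. bb Ls I y (fst a y))"
    unfolding PXF(1) by (rule sum.union_disjoint) (use finX finFar PXF(2) in auto)
  also have "\<dots> = (t + 1) * card F + (card X - card F) + s * card FL"
    using sumX sumFar cXF by simp
  finally have "int (\<Sum>y\<in>P. bb Ls I y (fst a y)) = int ((t + 1) * card F + (card X - card F) + s * card FL)"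
    by simp
  also have "\<dots> = int t * int (card F) + int (card X) + int s * int (card FL)"
    using cFX by (simp add: of_nat_diff algebra_simps)
  finally show ?thesis unfolding cardX F_def FL_def by (simp add: algebra_simps)
qed


end


lemma NT_A:
  fixes p :: int and d v :: nat
  assumes p: "p \<ge> 2" and d: "d \<ge> 1" and c: "(p ^ d + 1) dvd p ^ v - 1"
  shows "2 * d dvd v"
proof -
  define R where "R = p ^ d + 1"
  have c1: "p ^ d mod R = (-1) mod R" unfolding R_def by (simp add: mod_eq_dvd_iff)
  have c2: "p ^ (2 * d) mod R = 1 mod R"
  proof -
    have "p ^ (2 * d) mod R = (p ^ d mod R) ^ 2 mod R" by (simp add: power_mod power_mult mult.commute)
    also have "\<dots> = ((-1) mod R) ^ 2 mod R" using c1 by simp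
    also have "\<dots> = 1 mod R" by (simp add: power_mod)
    finally show ?thesis .
  qed
  define q where "q = v div (2 * d)"
  define \<rho> where "\<rho> = v mod (2 * d)"
  have v: "v = 2 * d * q + \<rho>" unfolding q_def \<rho>_def by simp
  have \<rho>lt: "\<rho> < 2 * d" unfolding \<rho>_def using d by simp
  have "p ^ v mod R = ((p ^ (2 * d)) ^ q * p ^ \<rho>) mod R" unfolding v by (simp add: power_add power_mult)
  also have "\<dots> = (((p ^ (2 * d)) mod R) ^ q mod R * p ^ \<rho>) mod R" by (simp add: power_mod mod_mult_left_eq)
  also have "\<dots> = ((1 mod R) ^ q mod R * p ^ \<rho>) mod R" using c2 by simp
  also have "\<dots> = p ^ \<rho> mod R" by (simp add: power_mod mod_mult_left_eq)
  finally have e1: "p ^ v mod R = p ^ \<rho> mod R" .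
  have "p ^ v mod R = 1 mod R" using c unfolding R_def[symmetric] by (simp add: mod_eq_dvd_iff)
  then have c3: "R dvd p ^ \<rho> - 1" using e1 by (simp add: mod_eq_dvd_iff)
  have pd: "p ^ x < p ^ d" if "x < d" for x using p that by (simp add: power_strict_increasing)
  have pos: "p ^ x > 0" for x using p by simp
  show ?thesis
  proof (cases "\<rho> < d")
    case True
    have "p ^ \<rho> - 1 = 0"
    proof (rule ccontr)
      assume ne: "p ^ \<rho> - 1 \<noteq> 0"
      have "0 < p ^ \<rho> - 1" using ne pos[of \<rho>] by linarith
      moreover have "p ^ \<rho> - 1 < R" using pd[OF True] unfolding R_def by linarith
      ultimately show False using c3 zdvd_not_zless by blast
    qed
    then have p1: "p ^ \<rho> = 1" by simp
    have "\<rho> = 0"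
    proof (rule ccontr)
      assume "\<rho> \<noteq> 0"
      then have "p ^ 0 < p ^ \<rho>" using p by (intro power_strict_increasing) auto
      then show False using p1 by simp
    qed
    then show ?thesis using v by simp
  next
    case False
    define \<tau> where "\<tau> = \<rho> - d"
    have \<rho>: "\<rho> = d + \<tau>" and \<tau>lt: "\<tau> < d" using False \<rho>lt unfolding \<tau>_def by auto
    have "p ^ \<rho> mod R = (p ^ d mod R * p ^ \<tau>) mod R" unfolding \<rho> by (simp add: power_add mod_mult_left_eq)
    also have "\<dots> = ((-1) mod R * p ^ \<tau>) mod R" using c1 by simp
    also have "\<dots> = (- (p ^ \<tau>)) mod R" by (simp add: mod_mult_left_eq)
    finally have X: "p ^ \<rho> mod R = (- (p ^ \<tau>)) mod R" .
    have "p ^ \<rho> mod R = 1 mod R" using c3 by (simp only: mod_eq_dvd_iff)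
    then have "(- (p ^ \<tau>)) mod R = 1 mod R" using X by simp
    then have "R dvd - (p ^ \<tau>) - 1" by (simp only: mod_eq_dvd_iff)
    then have dv: "R dvd p ^ \<tau> + 1"
      by (metis add.commute diff_conv_add_uminus dvd_minus_iff minus_add_distrib)
    have "0 < p ^ \<tau> + 1" using pos[of \<tau>] by linarith
    moreover have "p ^ \<tau> + 1 < R" using pd[OF \<tau>lt] unfolding R_def by linarith
    ultimately show ?thesis using dv zdvd_not_zless by blast
  qed
qed

lemma NT_cancel1:
  fixes P Y :: int and d :: nat
  assumes d: "d \<ge> 1" and dv: "(P ^ d + 1) dvd P * Y"
  shows "(P ^ d + 1) dvd Y"
proof -
  obtain d' where d': "d = Suc d'" using d by (cases d) auto
  have eq: "P ^ (d - 1) * (P * Y) = P ^ d * Y" unfolding d' by (simp add: algebra_simps)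
  have A: "(P ^ d + 1) dvd P ^ d * Y" using dvd_mult[OF dv, of "P ^ (d - 1)"] unfolding eq .
  have B: "(P ^ d + 1) dvd (P ^ d + 1) * Y" by simp
  have "(P ^ d + 1) dvd (P ^ d + 1) * Y - P ^ d * Y" using dvd_diff[OF B A] .
  then show ?thesis by (simp add: algebra_simps)
qed

lemma NT_cancel:
  fixes P Y :: int and d w :: nat
  assumes d: "d \<ge> 1" and dv: "(P ^ d + 1) dvd P ^ w * Y"
  shows "(P ^ d + 1) dvd Y"
  using dv
proof (induction w)
  case (Suc w)
  then have "(P ^ d + 1) dvd P * (P ^ w * Y)" by (simp add: mult.assoc)
  then have "(P ^ d + 1) dvd P ^ w * Y" by (rule NT_cancel1[OF d])
  then show ?case by (rule Suc.IH)
qed simp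

lemma NT_B:
  fixes P :: int and d u w :: nat
  assumes p: "P \<ge> 2" and d: "d \<ge> 1" and dv: "(P ^ d + 1) dvd P ^ u - P ^ w" and uw: "w \<le> u"
  shows "\<exists>q. u - w = 2 * d * q"
proof -
  have "P ^ u - P ^ w = P ^ w * (P ^ (u - w) - 1)"
    using uw by (simp add: algebra_simps power_add[symmetric])
  then have "(P ^ d + 1) dvd P ^ w * (P ^ (u - w) - 1)" using dv by simp
  then have "(P ^ d + 1) dvd P ^ (u - w) - 1" by (rule NT_cancel[OF d])
  then have "2 * d dvd u - w" by (rule NT_A[OF p d])
  then show ?thesis by (auto elim!: dvdE)
qed

lemma NT_main:
  fixes p s t al f :: nat
  assumes pr: "prime p" and stk: "s * t = p ^ k" and st: "s > t" and alu: "al = p ^ u"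
    and dv: "int s + int t dvd int t * int al + int s * int f"
  shows "f \<noteq> 0 \<and> ((\<exists>m. f = p ^ m) \<longrightarrow> (\<exists>e::int. even e \<and> real al / real f = (real s / real t) powi e))"
proof -
  have p2: "p \<ge> 2" using pr by (rule prime_ge_2_nat)
  have "s dvd p ^ k" unfolding stk[symmetric] by (rule dvd_triv_left)
  then obtain i where i: "s = p ^ i" using divides_primepow_nat[OF pr, of s k] by blast
  have "t dvd p ^ k" unfolding stk[symmetric] by (rule dvd_triv_right)
  then obtain j where j: "t = p ^ j" using divides_primepow_nat[OF pr, of t k] by blast
  have ji: "j < i" using st p2 unfolding i j by (simp add: power_less_imp_less_exp)
  define d where "d = i - j"
  have d1: "d \<ge> 1" using ji by (simp add: d_def)
  have sd: "s = t * p ^ d" unfolding i j d_def using ji by (simp add: power_add[symmetric])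
  define P where "P = int p"
  have P2: "P \<ge> 2" using p2 by (simp add: P_def)
  have tpos: "int t > 0" using j p2 by simp
  have "int t * (P ^ d + 1) dvd int t * (int al + P ^ d * int f)"
    using dv unfolding sd P_def by (simp add: algebra_simps)
  then have dv2: "(P ^ d + 1) dvd int al + P ^ d * int f" using tpos by simp
  have "(P ^ d + 1) dvd (int al + P ^ d * int f) - (P ^ d + 1) * int f"
    using dvd_diff[OF dv2 dvd_triv_left] .
  moreover have "(int al + P ^ d * int f) - (P ^ d + 1) * int f = P ^ u - int f"
    unfolding alu P_def by (simp add: algebra_simps)
  ultimately have dv3: "(P ^ d + 1) dvd P ^ u - int f" by simp
  have f0: "f \<noteq> 0"
  proof
    assume "f = 0"
    then have "(P ^ d + 1) dvd P ^ u * 1" using dv3 by simp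
    then have "(P ^ d + 1) dvd 1" by (rule NT_cancel[OF d1])
    then have "P ^ d + 1 \<le> 1" using zdvd_imp_le[of "P ^ d + 1" 1] by simp
    moreover have "P ^ d > 0" using P2 by simp
    ultimately show False by simp
  qed
  have ii: "\<exists>e::int. even e \<and> real al / real f = (real s / real t) powi e" if fm: "f = p ^ w" for w
  proof -
    have dv4: "(P ^ d + 1) dvd P ^ u - P ^ w" using dv3 fm by (simp add: P_def)
    have pj: "real p ^ j \<noteq> 0" using p2 by simp
    have rst: "real s / real t = real p ^ d" unfolding sd j using pj by (simp add: field_simps)
    show ?thesis
    proof (cases "w \<le> u")
      case True
      obtain q where q: "u - w = 2 * d * q" using NT_B[OF P2 d1 dv4 True] by blast
      have "real al / real f = real p ^ u / real p ^ w" unfolding alu fm by simp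
      also have "\<dots> = real p ^ (u - w)" using power_diff[of "real p" w u] p2 True by simp
      also have "\<dots> = (real p ^ d) ^ (2 * q)" unfolding q by (simp add: power_mult[symmetric] mult.commute mult.left_commute)
      also have "\<dots> = (real p ^ d) powi (int (2 * q))" by (simp only: power_int_of_nat)
      finally show ?thesis using rst by (intro exI[of _ "int (2 * q)"]) simp
    next
      case False
      then have uw: "u \<le> w" by simp
      have "(P ^ d + 1) dvd - (P ^ u - P ^ w)" using dv4 by (simp only: dvd_minus_iff)
      then have dv5: "(P ^ d + 1) dvd P ^ w - P ^ u" by simp
      obtain q where q: "w - u = 2 * d * q" using NT_B[OF P2 d1 dv5 uw] by blast
      have "real al / real f = real p ^ u / real p ^ w" unfolding alu fm by simp
      also have "\<dots> = 1 / (real p ^ w / real p ^ u)" by simp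
      also have "real p ^ w / real p ^ u = real p ^ (w - u)" using power_diff[of "real p" u w] p2 uw by simp
      also have "real p ^ (w - u) = (real p ^ d) ^ (2 * q)" unfolding q by (simp add: power_mult[symmetric] mult.commute mult.left_commute)
      also have "\<dots> = (real p ^ d) powi (int (2 * q))" by (simp only: power_int_of_nat)
      also have "1 / \<dots> = (real p ^ d) powi (- int (2 * q))" by (simp only: power_int_minus_divide)
      finally show ?thesis using rst by (intro exI[of _ "- int (2 * q)"]) simp
    qed
  qed
  show ?thesis using f0 ii by blast
qed



theorem mainTheorem10:
  fixes P :: "'p set" and Ls :: "'l set" and I :: "'p \<Rightarrow> 'l \<Rightarrow> bool"
    and s t p :: nat and x :: 'p and G :: "(('p \<Rightarrow> 'p) \<times> ('l \<Rightarrow> 'l)) set"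
    and a :: "('p \<Rightarrow> 'p) \<times> ('l \<Rightarrow> 'l)" and La :: 'l
  assumes EGQ: "elation_GQ P Ls I s t x G"
    and st: "s > t"
    and pr: "prime p"
    and stpow: "\<exists>k. s * t = p ^ k"
    and aG: "a \<in> G" and anid: "a \<noteq> aut_id"
    and La: "La \<in> Ls" "I x La"
    and fixLa: "\<forall>q\<in>P. fst a q = q \<longrightarrow> I q La"
    and alphapow: "\<exists>k. card {q\<in>P. I q La \<and> fst a q = q} - 1 = p ^ k"
  shows "card {l\<in>Ls. \<not> I x l \<and> snd a l = l} \<noteq> 0 \<and>
         ((\<exists>m. card {l\<in>Ls. \<not> I x l \<and> snd a l = l} = p ^ m) \<longrightarrow>
           (\<exists>e::int. even e \<and>
              real (card {q\<in>P. I q La \<and> fst a q = q} - 1)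
                / real (card {l\<in>Ls. \<not> I x l \<and> snd a l = l})
              = (real s / real t) powi e))"
proof -
  have gq: "finite_GQ P Ls I s t" and x: "x \<in> P" and sg: "aut_subgroup P Ls I G"
    and fixG: "\<forall>a\<in>G. \<forall>l\<in>Ls. I x l \<longrightarrow> snd a l = l"
    using EGQ unfolding elation_GQ_def by (meson conjunct1 conjunct2)+
  have aut: "automorphism P Ls I a" using sg aG unfolding aut_subgroup_def by blast
  have fixx: "\<forall>l\<in>Ls. I x l \<longrightarrow> snd a l = l" using fixG aG by auto
  obtain k where k: "s * t = p ^ k" using stpow by blast
  obtain u where u: "card {q\<in>P. I q La \<and> fst a q = q} - 1 = p ^ u" using alphapow by blast
  define F where "F = card {q\<in>P. I q La \<and> fst a q = q}"
  define f where "f = card {l\<in>Ls. \<not> I x l \<and> snd a l = l}"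
  define T where "T = (\<Sum>y\<in>P. bb Ls I y (fst a y))"
  have st0: "s + t > 0" using st by simp
  have B: "int s + int t dvd int T - (int s * int t + 1)"
    unfolding T_def by (rule benson[OF gq aut x st0])
  have TF: "int T = int t * int F + (1 + (int t + 1) * int s) + int s * int f"
    unfolding T_def F_def f_def by (rule Tform[OF gq aut x fixx La fixLa])
  have pu: "p ^ u > 0" by (rule zero_less_power[OF prime_gt_0_nat[OF pr]])
  have Fm: "F - 1 = p ^ u" unfolding F_def by (rule u)
  have Fge: "F \<ge> 1" using Fm pu by (cases F) auto
  define A where "A = int (F - 1)"
  have iF: "int F = A + 1" unfolding A_def using Fge by (cases F) auto
  have TF': "int T = int t * (A + 1) + (1 + (int t + 1) * int s) + int s * int f"
    using TF unfolding iF .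
  have eq: "int T - (int s * int t + 1) = (int t * A + int s * int f) + (int s + int t)"
    unfolding TF' by (simp add: algebra_simps)
  have B': "int s + int t dvd (int t * A + int s * int f) + (int s + int t)"
    using B unfolding eq .
  have "int s + int t dvd (int t * A + int s * int f) + (int s + int t) - (int s + int t)"
    using dvd_diff[OF B' dvd_refl] .
  then have dv: "int s + int t dvd int t * int (F - 1) + int s * int f" by (simp add: A_def)
  have "f \<noteq> 0 \<and> ((\<exists>m. f = p ^ m) \<longrightarrow> (\<exists>e::int. even e \<and> real (F - 1) / real f = (real s / real t) powi e))"
    by (rule NT_main[OF pr k st u[folded F_def] dv])
  then show ?thesis unfolding F_def f_def .
qed


end
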